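(* For some constants $C\in[1,\infty)$, $\alpha\in(0,\infty)$, $\varrho_\alpha\in(0,\alpha\wedge1)$, $c\in(0,1)$ and $t_0\in\mathbb{N}$, let $h_t=t^{-\alpha}$ for all $t\ge1$ and let $(t_p)_{p\ge0}$ satisfy $t_p=t_{p-1}+\lceil C_{p-1}\log(t_{p-1})\vee C\rceil$ for $p\ge1$, for some $C_{p-1}\in[c\,t_{p-1}^{\varrho_\alpha},t_{p-1}^{\varrho_\alpha}/c]$. Then $(h_t)$ and $(t_p)$ satisfy: (1) $\log(h_{t_{p-1}})/(t_p-t_{p-1})\to0$ and $(t_p-t_{p-1})\sum_{s=t_{p-1}+1}^{t_p-1}h_s^2\to0$; (2) $h_{t_p}<h_{t_{p-1}}$ for all $p$ and $\liminf_{p\to\infty}(h_{t_p}t_p^{\alpha'}+t_p^{-\alpha'}/h_{t_p})>0$ for some $\alpha'\in(0,\infty)$; (3) $\limsup_{p\to\infty}(t_{p+1}-t_p)/(t_p-t_{p-1})<\infty$. Moreover, they also satisfy (4) $|\zeta(h_{t_p}^{-\beta_\star})|^{-2k_\star}\sum_{i=1}^p(t_i-t_{i-1})^{-k_\star\mathds{1}_{\mathbb{N}}(k_\star)}\to0$ for some $\beta_\star\in(0,\infty)$, provided (A6) holds for some $k_\star>(1+\varrho_\alpha)/\varrho_\alpha$, with $\zeta$ the function of (A6).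
   Context: $(Y_t)_{t\ge1}$ are i.i.d. on $(\Omega,\mathcal{F},\mathbb{P})$ with values in $(\mathsf{Y},\mathcal{Y})$; $\{f_\theta,\theta\in\Theta\subseteq\mathbb{R}^d\}$ are densities w.r.t. a $\sigma$-finite measure, $\theta_\star=\arg\max_{\theta\in\Theta}\mathbb{E}\{\log f_\theta(Y_1)\}$; $\mathbb{E}(g)=\mathbb{E}\{g(Y_1)\}$; $\tilde f_\theta=f_\theta$ on $\Theta$ and $0$ otherwise; $V_\epsilon=\Theta\setminus B_\epsilon(\theta_\star)$ with $B_\epsilon$ the open Euclidean ball. (A6) (for a given $k_\star\in\{1/2\}\cup\mathbb{N}$) One of the following holds: (i) there is $C_1\in(0,\infty)$ with $\sup_{C\ge C_1}\mathbb{E}[|\sup_{\theta\in V_C}\log(\tilde f_\theta/f_{\theta_\star})-\mathbb{E}\{\sup_{\theta\in V_C}\log(\tilde f_\theta/f_{\theta_\star})\}|^{2k_\star}]<\infty$ and $\limsup_{C\to\infty}\zeta(C)(\log C)^{-1}<0$ with $\zeta(C)=\mathbb{E}\{\sup_{\theta\in V_C}\log(\tilde f_\theta/f_{\theta_\star})\}$; (ii) $\limsup_{C\to\infty}\zeta(C)(\log C)^{-1}<0$ with $\zeta(C)=\log\{\sup_{\theta\in V_C}\mathbb{E}(\tilde f_\theta/f_{\theta_\star})\}$; (iii) $\mathbb{E}(|\log f_{\theta_\star}|^{2k_\star})<\infty$ and $\limsup_{C\to\infty}\zeta(C)(\log C)^{-1}<0$ with $\zeta(C)=\log\{\sup_{\theta\in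 V_C}\mathbb{E}(\tilde f_\theta)\}$. *)

theory Defs
  imports "HOL-Probability.Probability"
begin

definition hstep :: "real \<Rightarrow> nat \<Rightarrow> real" where
  "hstep \<alpha> s = real s powr (- \<alpha>)"

definition elog :: "real \<Rightarrow> ereal" where
  "elog x = (if x > 0 then ereal (ln x) else - \<infinity>)"

definition eln :: "ennreal \<Rightarrow> ereal" where
  "eln x = (if x = \<infinity> then \<infinity> else elog (enn2real x))"

definition epow :: "ereal \<Rightarrow> real \<Rightarrow> ereal" where
  "epow x k = (if x = \<infinity> then \<infinity> else ereal (real_of_ereal x powr k))"

definition eexpect :: "'a measure \<Rightarrow> ('a \<Rightarrow> ereal) \<Rightarrow> ereal" where
  "eexpect M X = enn2ereal (\<integral>\<^sup>+ x. e2ennreal (max 0 (X x)) \<partial>M)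
                 - enn2ereal (\<integral>\<^sup>+ x. e2ennreal (max 0 (- X x)) \<partial>M)"

definition ftil :: "('p set) \<Rightarrow> ('p \<Rightarrow> 'y \<Rightarrow> real) \<Rightarrow> 'p \<Rightarrow> 'y \<Rightarrow> real" where
  "ftil \<Theta> f \<theta> y = (if \<theta> \<in> \<Theta> then f \<theta> y else 0)"

definition Vset :: "('p::metric_space) set \<Rightarrow> 'p \<Rightarrow> real \<Rightarrow> 'p set" where
  "Vset \<Theta> \<theta>s \<epsilon> = \<Theta> - ball \<theta>s \<epsilon>"

definition stat_model ::
  "'a measure \<Rightarrow> 'y measure \<Rightarrow> (nat \<Rightarrow> 'a \<Rightarrow> 'y) \<Rightarrow> 'y measure \<Rightarrow> (real^'d) set
    \<Rightarrow> (real^'d \<Rightarrow> 'y \<Rightarrow> real) \<Rightarrow> real^'d \<Rightarrow> bool" where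
  "stat_model M N Y \<mu> \<Theta> f \<theta>s \<longleftrightarrow>
     prob_space M \<and> (\<forall>t. Y t \<in> measurable M N)
     \<and> prob_space.indep_vars M (\<lambda>_. N) Y {1..}
     \<and> (\<forall>t\<ge>1. distr M N (Y t) = distr M N (Y 1))
     \<and> sigma_finite_measure \<mu> \<and> sets \<mu> = sets N
     \<and> (\<forall>\<theta>\<in>\<Theta>. f \<theta> \<in> borel_measurable N \<and> (\<forall>y\<in>space N. 0 \<le> f \<theta> y)
            \<and> (\<integral>\<^sup>+ y. ennreal (f \<theta> y) \<partial>\<mu>) = 1)
     \<and> \<theta>s \<in> \<Theta>
     \<and> (\<forall>\<theta>\<in>\<Theta> - {\<theta>s}. eexpect M (\<lambda>\<omega>. elog (f \<theta> (Y 1 \<omega>)))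
                           < eexpect M (\<lambda>\<omega>. elog (f \<theta>s (Y 1 \<omega>))))"

definition supLR ::
  "(real^'d) set \<Rightarrow> (real^'d \<Rightarrow> 'y \<Rightarrow> real) \<Rightarrow> real^'d \<Rightarrow> real \<Rightarrow> 'y \<Rightarrow> ereal" where
  "supLR \<Theta> f \<theta>s C y = (SUP \<theta>\<in>Vset \<Theta> \<theta>s C. elog (ftil \<Theta> f \<theta> y / f \<theta>s y))"

definition zeta_i :: "'a measure \<Rightarrow> (nat \<Rightarrow> 'a \<Rightarrow> 'y) \<Rightarrow> (real^'d) set
    \<Rightarrow> (real^'d \<Rightarrow> 'y \<Rightarrow> real) \<Rightarrow> real^'d \<Rightarrow> real \<Rightarrow> ereal" where
  "zeta_i M Y \<Theta> f \<theta>s C = eexpect M (\<lambda>\<omega>. supLR \<Theta> f \<theta>s C (Y 1 \<omega>))"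

definition zeta_ii :: "'a measure \<Rightarrow> (nat \<Rightarrow> 'a \<Rightarrow> 'y) \<Rightarrow> (real^'d) set
    \<Rightarrow> (real^'d \<Rightarrow> 'y \<Rightarrow> real) \<Rightarrow> real^'d \<Rightarrow> real \<Rightarrow> ereal" where
  "zeta_ii M Y \<Theta> f \<theta>s C =
     eln (SUP \<theta>\<in>Vset \<Theta> \<theta>s C. \<integral>\<^sup>+ \<omega>. ennreal (ftil \<Theta> f \<theta> (Y 1 \<omega>) / f \<theta>s (Y 1 \<omega>)) \<partial>M)"

definition zeta_iii :: "'a measure \<Rightarrow> (nat \<Rightarrow> 'a \<Rightarrow> 'y) \<Rightarrow> (real^'d) set
    \<Rightarrow> (real^'d \<Rightarrow> 'y \<Rightarrow> real) \<Rightarrow> real^'d \<Rightarrow> real \<Rightarrow> ereal" where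
  "zeta_iii M Y \<Theta> f \<theta>s C =
     eln (SUP \<theta>\<in>Vset \<Theta> \<theta>s C. \<integral>\<^sup>+ \<omega>. ennreal (ftil \<Theta> f \<theta> (Y 1 \<omega>)) \<partial>M)"

definition neg_log_growth :: "(real \<Rightarrow> ereal) \<Rightarrow> bool" where
  "neg_log_growth \<zeta> \<longleftrightarrow> Limsup at_top (\<lambda>C. \<zeta> C / ereal (ln C)) < 0"

definition A6 :: "'a measure \<Rightarrow> (nat \<Rightarrow> 'a \<Rightarrow> 'y) \<Rightarrow> (real^'d) set
    \<Rightarrow> (real^'d \<Rightarrow> 'y \<Rightarrow> real) \<Rightarrow> real^'d \<Rightarrow> real \<Rightarrow> (real \<Rightarrow> ereal) \<Rightarrow> bool" where
  "A6 M Y \<Theta> f \<theta>s k \<zeta> \<longleftrightarrow>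
     (k = 1/2 \<or> (\<exists>n::nat. n \<ge> 1 \<and> k = real n)) \<and>
     ( (\<zeta> = zeta_i M Y \<Theta> f \<theta>s
         \<and> (\<exists>C1>0. (SUP C\<in>{C1..}. \<integral>\<^sup>+ \<omega>. e2ennreal
               (epow \<bar>supLR \<Theta> f \<theta>s C (Y 1 \<omega>) - zeta_i M Y \<Theta> f \<theta>s C\<bar> (2 * k)) \<partial>M) < \<infinity>)
         \<and> neg_log_growth \<zeta>)
     \<or> (\<zeta> = zeta_ii M Y \<Theta> f \<theta>s \<and> neg_log_growth \<zeta>)
     \<or> (\<zeta> = zeta_iii M Y \<Theta> f \<theta>s
         \<and> (\<integral>\<^sup>+ \<omega>. e2ennreal (epow \<bar>elog (f \<theta>s (Y 1 \<omega>))\<bar> (2 * k)) \<partial>M) < \<infinity>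
         \<and> neg_log_growth \<zeta>))"

definition inv_pow :: "ereal \<Rightarrow> real \<Rightarrow> ereal" where
  "inv_pow z k = (if z = 0 then \<infinity> else if \<bar>z\<bar> = \<infinity> then 0
                  else ereal (\<bar>real_of_ereal z\<bar> powr (- 2 * k)))"

end

theory Submission
  imports Defs "HOL-Real_Asymp.Real_Asymp"
begin

theorem proposition2:
  fixes Cc \<alpha> \<rho> c :: real and t0 :: nat and t :: "nat \<Rightarrow> nat" and Cs :: "nat \<Rightarrow> real"
    and M :: "'a measure" and N :: "'y measure" and Y :: "nat \<Rightarrow> 'a \<Rightarrow> 'y"
    and \<mu> :: "'y measure" and \<Theta> :: "(real^'d) set" and f :: "real^'d \<Rightarrow> 'y \<Rightarrow> real"
    and \<theta>s :: "real^'d"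
  assumes "Cc \<ge> 1" and "\<alpha> > 0" and "0 < \<rho>" and "\<rho> < min \<alpha> 1"
    and "0 < c" and "c < 1" and "t0 \<ge> 1" and "t 0 = t0"
    and "\<forall>p. c * real (t p) powr \<rho> \<le> Cs p \<and> Cs p \<le> real (t p) powr \<rho> / c"
    and "\<forall>p. t (Suc p) = t p + nat \<lceil>max (Cs p * ln (real (t p))) Cc\<rceil>"
  shows
    "((\<lambda>p. ln (hstep \<alpha> (t p)) / real (t (Suc p) - t p)) \<longlonglongrightarrow> 0)
   \<and> ((\<lambda>p. real (t (Suc p) - t p) * (\<Sum>s\<in>{t p<..<t (Suc p)}. (hstep \<alpha> s)\<^sup>2)) \<longlonglongrightarrow> 0)
   \<and> (\<forall>p. hstep \<alpha> (t (Suc p)) < hstep \<alpha> (t p))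
   \<and> (\<exists>\<alpha>'>0. Liminf sequentially (\<lambda>p. ereal (hstep \<alpha> (t p) * real (t p) powr \<alpha>'
                                         + real (t p) powr (- \<alpha>') / hstep \<alpha> (t p))) > 0)
   \<and> Limsup sequentially (\<lambda>p. ereal (real (t (Suc (Suc p)) - t (Suc p)) / real (t (Suc p) - t p))) < \<infinity>
   \<and> (\<forall>k \<zeta>. stat_model M N Y \<mu> \<Theta> f \<theta>s \<and> A6 M Y \<Theta> f \<theta>s k \<zeta> \<and> k > (1 + \<rho>) / \<rho>
        \<longrightarrow> (\<exists>\<beta>>0. (\<lambda>p. inv_pow (\<zeta> (hstep \<alpha> (t p) powr (- \<beta>))) k
               * ereal (\<Sum>i\<in>{1..p}. real (t i - t (i - 1)) powr (- k * (if k \<in> \<nat> then 1 else 0))))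
             \<longlonglongrightarrow> 0))"
proof -
  note Cc = assms(1) and al = assms(2) and rho = assms(3) assms(4) and c = assms(5,6)
  define T where "T p = real (t p)" for p
  define D where "D p = real (t (Suc p) - t p)" for p
  have Cs: "c * T p powr \<rho> \<le> Cs p" "Cs p \<le> T p powr \<rho> / c" for p
    using assms(9) by (auto simp: T_def)
  have step: "t (Suc p) = t p + nat \<lceil>max (Cs p * ln (T p)) Cc\<rceil>" for p
    using assms(10) by (simp add: T_def)
  have tge: "t p \<ge> p + 1" for p
  proof (induction p)
    case 0 then show ?case using assms(7,8) by simp
  next
    case (Suc p)
    have "nat \<lceil>max (Cs p * ln (T p)) Cc\<rceil> \<ge> 1" using Cc by linarith
    then show ?case using step[of p] Suc by simp
  qed
  have Tpos: "T p \<ge> 1" for p using tge[of p] by (simp add: T_def)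
  have D_eq: "D p = real (nat \<lceil>max (Cs p * ln (T p)) Cc\<rceil>)" for p
    unfolding D_def using step[of p] by simp
  have D_lo: "D p \<ge> max (Cs p * ln (T p)) Cc" for p
    unfolding D_eq using Cc by linarith
  have D_hi: "D p \<le> max (Cs p * ln (T p)) Cc + 1" for p
    unfolding D_eq using Cc by linarith
  have lnT: "ln (T p) \<ge> 0" for p using Tpos[of p] by simp
  have Cspos: "Cs p > 0" for p
    using Cs(1)[of p] Tpos[of p] c by (smt (verit) powr_gt_zero mult_pos_pos)
  have D_hi2: "D p \<le> T p powr \<rho> * ln (T p) / c + Cc + 1" for p
  proof -
    have "Cs p * ln (T p) \<le> T p powr \<rho> / c * ln (T p)"
      using Cs(2)[of p] lnT[of p] by (rule mult_right_mono)
    then show ?thesis using D_hi[of p] Cspos[of p] lnT[of p] Cc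
      by (smt (verit) mult_nonneg_nonneg times_divide_eq_left)
  qed
  have D_lo2: "D p \<ge> c * T p powr \<rho> * ln (T p)" for p
    using D_lo[of p] Cs(1)[of p] lnT[of p] by (smt (verit) mult_right_mono)
  have D_ge1: "D p \<ge> 1" for p using D_lo[of p] Cc by simp
  have TSuc: "T (Suc p) = T p + D p" for p
    unfolding T_def D_def using step[of p] by simp
  have limT: "filterlim T at_top sequentially"
  proof (rule filterlim_at_top_mono[OF filterlim_real_sequentially])
    show "\<forall>\<^sub>F x in sequentially. real x \<le> T x"
    proof (intro always_eventually allI)
      fix x show "real x \<le> T x" using tge[of x] by (simp add: T_def)
    qed
  qed

  have lnTev: "\<forall>\<^sub>F p in sequentially. T p \<ge> 3"
    using limT by (simp add: filterlim_at_top)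
  have hst: "hstep \<alpha> (t p) = T p powr (- \<alpha>)" for p by (simp add: hstep_def T_def)
  have Tgt0: "T p > 0" for p using Tpos[of p] by simp
  have P1: "(\<lambda>p. ln (hstep \<alpha> (t p)) / D p) \<longlonglongrightarrow> 0"
  proof (rule Lim_null_comparison)
    have G: "((\<lambda>x::real. \<alpha> / c * x powr (-\<rho>)) \<longlongrightarrow> 0) at_top"
      using al rho by real_asymp
    show "(\<lambda>p. \<alpha> / c * T p powr (-\<rho>)) \<longlonglongrightarrow> 0"
      using filterlim_compose[OF G limT] .
    show "\<forall>\<^sub>F p in sequentially. norm (ln (hstep \<alpha> (t p)) / D p) \<le> \<alpha> / c * T p powr (-\<rho>)"
    proof (intro always_eventually allI)
      fix p
      have l: "ln (hstep \<alpha> (t p)) = - \<alpha> * ln (T p)" using Tgt0[of p] by (simp add: hst ln_powr)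
      have Dp: "D p > 0" using D_ge1[of p] by simp
      have "norm (ln (hstep \<alpha> (t p)) / D p) = \<alpha> * ln (T p) / D p"
        using l lnT[of p] al Dp by (simp add: abs_mult)
      also have "\<dots> \<le> \<alpha> / c * T p powr (-\<rho>)"
      proof (cases "ln (T p) = 0")
        case True then show ?thesis using al c by simp
      next
        case False
        then have lp: "ln (T p) > 0" using lnT[of p] by simp
        have tp: "T p powr \<rho> > 0" using Tgt0[of p] by simp
        have "\<alpha> * ln (T p) / D p \<le> \<alpha> * ln (T p) / (c * T p powr \<rho> * ln (T p))"
          using D_lo2[of p] lp tp al c Dp by (intro divide_left_mono) (auto intro!: mult_pos_pos)
        also have "\<dots> = \<alpha> / c * T p powr (-\<rho>)"
          using lp tp c by (simp add: powr_minus field_simps)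
        finally show ?thesis .
      qed
      finally show "norm (ln (hstep \<alpha> (t p)) / D p) \<le> \<alpha> / c * T p powr (-\<rho>)" .
    qed
  qed
  have P2: "(\<lambda>p. D p * (\<Sum>s\<in>{t p<..<t (Suc p)}. (hstep \<alpha> s)\<^sup>2)) \<longlonglongrightarrow> 0"
  proof (rule Lim_null_comparison)
    have G: "((\<lambda>x::real. (x powr \<rho> * ln x / c + Cc + 1)^2 * x powr (-2*\<alpha>)) \<longlongrightarrow> 0) at_top"
      using al rho c by real_asymp
    show "(\<lambda>p. (T p powr \<rho> * ln (T p) / c + Cc + 1)^2 * T p powr (-2*\<alpha>)) \<longlonglongrightarrow> 0"
      using filterlim_compose[OF G limT] .
    show "\<forall>\<^sub>F p in sequentially. norm (D p * (\<Sum>s\<in>{t p<..<t (Suc p)}. (hstep \<alpha> s)\<^sup>2))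
           \<le> (T p powr \<rho> * ln (T p) / c + Cc + 1)^2 * T p powr (-2*\<alpha>)"
    proof (intro always_eventually allI)
      fix p
      have each: "(hstep \<alpha> s)\<^sup>2 \<le> T p powr (-2*\<alpha>)" if "s \<in> {t p<..<t (Suc p)}" for s
      proof -
        have sT: "real s \<ge> T p" using that by (simp add: T_def)
        have "(hstep \<alpha> s)\<^sup>2 = real s powr (-2*\<alpha>)"
          unfolding hstep_def power2_eq_square powr_add[symmetric] by simp
        also have "\<dots> \<le> T p powr (-2*\<alpha>)"
          using sT Tgt0[of p] al by (intro powr_mono2') auto
        finally show ?thesis .
      qed
      have "(\<Sum>s\<in>{t p<..<t (Suc p)}. (hstep \<alpha> s)\<^sup>2) \<le> real (card {t p<..<t (Suc p)}) * T p powr (-2*\<alpha>)"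
        using each by (intro sum_bounded_above) auto
      also have "real (card {t p<..<t (Suc p)}) \<le> D p" by (simp add: D_def)
      finally have S: "(\<Sum>s\<in>{t p<..<t (Suc p)}. (hstep \<alpha> s)\<^sup>2) \<le> D p * T p powr (-2*\<alpha>)"
        by (smt (verit) mult_right_mono powr_ge_zero)
      have S0: "0 \<le> (\<Sum>s\<in>{t p<..<t (Suc p)}. (hstep \<alpha> s)\<^sup>2)" by (intro sum_nonneg) auto
      have Dp: "D p \<ge> 0" using D_ge1[of p] by simp
      have "norm (D p * (\<Sum>s\<in>{t p<..<t (Suc p)}. (hstep \<alpha> s)\<^sup>2)) = D p * (\<Sum>s\<in>{t p<..<t (Suc p)}. (hstep \<alpha> s)\<^sup>2)"
        using S0 Dp by simp
      also have "\<dots> \<le> D p * (D p * T p powr (-2*\<alpha>))" using S Dp by (rule mult_left_mono)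
      also have "\<dots> = (D p)^2 * T p powr (-2*\<alpha>)" by (simp add: power2_eq_square)
      also have "\<dots> \<le> (T p powr \<rho> * ln (T p) / c + Cc + 1)^2 * T p powr (-2*\<alpha>)"
        using D_hi2[of p] Dp by (intro mult_right_mono power_mono) auto
      finally show "norm (D p * (\<Sum>s\<in>{t p<..<t (Suc p)}. (hstep \<alpha> s)\<^sup>2))
           \<le> (T p powr \<rho> * ln (T p) / c + Cc + 1)^2 * T p powr (-2*\<alpha>)" .
    qed
  qed

  have P3: "\<forall>p. hstep \<alpha> (t (Suc p)) < hstep \<alpha> (t p)"
  proof
    fix p
    have "T p < T (Suc p)" using TSuc[of p] D_ge1[of p] by simp
    then show "hstep \<alpha> (t (Suc p)) < hstep \<alpha> (t p)"
      unfolding hst using Tgt0[of p] al by (intro powr_less_mono2_neg) auto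
  qed
  have P4: "\<exists>\<alpha>'>0. Liminf sequentially (\<lambda>p. ereal (hstep \<alpha> (t p) * real (t p) powr \<alpha>'
                                         + real (t p) powr (- \<alpha>') / hstep \<alpha> (t p))) > 0"
  proof (intro exI conjI)
    show "\<alpha> > 0" by (rule al)
    have "1 \<le> Liminf sequentially (\<lambda>p. ereal (hstep \<alpha> (t p) * real (t p) powr \<alpha>
                                         + real (t p) powr (- \<alpha>) / hstep \<alpha> (t p)))"
    proof (intro Liminf_bounded always_eventually allI)
      fix p
      have e: "hstep \<alpha> (t p) * real (t p) powr \<alpha> = 1"
        using Tgt0[of p] unfolding hst T_def by (simp add: powr_add[symmetric])
      have "0 \<le> real (t p) powr (- \<alpha>) / hstep \<alpha> (t p)" unfolding hstep_def by simp
      then show "1 \<le> ereal (hstep \<alpha> (t p) * real (t p) powr \<alpha>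
                                         + real (t p) powr (- \<alpha>) / hstep \<alpha> (t p))"
        using e by simp
    qed
    then show "0 < Liminf sequentially (\<lambda>p. ereal (hstep \<alpha> (t p) * real (t p) powr \<alpha>
                                         + real (t p) powr (- \<alpha>) / hstep \<alpha> (t p)))"
      by (rule less_le_trans[rotated]) simp
  qed
  have evDT: "\<forall>\<^sub>F p in sequentially. D p \<le> T p"
  proof -
    have G: "((\<lambda>x::real. (x powr \<rho> * ln x / c + Cc + 1) / x) \<longlongrightarrow> 0) at_top"
      using rho c by real_asymp
    have "\<forall>\<^sub>F p in sequentially. (T p powr \<rho> * ln (T p) / c + Cc + 1) / T p < 1"
      using order_tendstoD(2)[OF filterlim_compose[OF G limT]] by simp
    then show ?thesis
    proof (rule eventually_mono)
      fix p assume "(T p powr \<rho> * ln (T p) / c + Cc + 1) / T p < 1"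
      then have "T p powr \<rho> * ln (T p) / c + Cc + 1 < T p" using Tgt0[of p] by (simp add: divide_less_eq)
      then show "D p \<le> T p" using D_hi2[of p] by simp
    qed
  qed
  have P5: "Limsup sequentially (\<lambda>p. ereal (real (t (Suc (Suc p)) - t (Suc p)) / real (t (Suc p) - t p))) < \<infinity>"
  proof -
    have "Limsup sequentially (\<lambda>p. ereal (real (t (Suc (Suc p)) - t (Suc p)) / real (t (Suc p) - t p)))
          \<le> ereal (4 / c^2 + 2)"
    proof (intro Limsup_bounded)
      show "\<forall>\<^sub>F p in sequentially. ereal (real (t (Suc (Suc p)) - t (Suc p)) / real (t (Suc p) - t p)) \<le> ereal (4 / c^2 + 2)"
        using evDT lnTev
      proof eventually_elim
        case (elim p)
        note DT = elim(1) and T3 = elim(2)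
        define X where "X = T p powr \<rho> * ln (T p)"
        have lp: "ln (T p) \<ge> 1" using T3 ln_ge_iff[of "T p" 1] Tgt0[of p] exp_le by linarith
        have tp: "T p powr \<rho> > 0" using Tgt0[of p] by simp
        have Xpos: "X > 0" unfolding X_def using lp tp by simp
        have T'lo: "T (Suc p) \<ge> T p" using TSuc[of p] D_ge1[of p] by simp
        have T'hi: "T (Suc p) \<le> 2 * T p" using TSuc[of p] DT by simp
        have pw: "T (Suc p) powr \<rho> \<le> 2 * T p powr \<rho>"
        proof -
          have "T (Suc p) powr \<rho> \<le> (2 * T p) powr \<rho>"
            using T'hi Tgt0[of "Suc p"] rho by (intro powr_mono2) auto
          also have "\<dots> = 2 powr \<rho> * T p powr \<rho>" using Tgt0[of p] by (simp add: powr_mult)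
          also have "\<dots> \<le> 2 * T p powr \<rho>"
          proof -
            have "2 powr \<rho> \<le> 2 powr (1::real)" using rho by (intro powr_mono) auto
            then show ?thesis using tp by (intro mult_right_mono) auto
          qed
          finally show ?thesis .
        qed
        have ln': "ln (T (Suc p)) \<le> 2 * ln (T p)"
        proof -
          have "ln (T (Suc p)) \<le> ln (2 * T p)" using T'hi Tgt0[of "Suc p"] by simp
          also have "\<dots> = ln 2 + ln (T p)" using Tgt0[of p] by (simp add: ln_mult)
          also have "ln 2 \<le> ln (T p)" using T3 by simp
          finally show ?thesis by simp
        qed
        have "T (Suc p) powr \<rho> * ln (T (Suc p)) \<le> (2 * T p powr \<rho>) * (2 * ln (T p))"
          using pw ln' lnT[of "Suc p"] tp by (intro mult_mono) auto
        then have "T (Suc p) powr \<rho> * ln (T (Suc p)) / c \<le> 4 * X / c"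
          using c unfolding X_def by (intro divide_right_mono) auto
        then have D'hi: "D (Suc p) \<le> 4 * X / c + Cc + 1"
          using D_hi2[of "Suc p"] by linarith
        have Dlo: "D p \<ge> c * X" using D_lo2[of p] unfolding X_def by simp
        have Dpos: "D p > 0" using D_ge1[of p] by simp
        have "D (Suc p) / D p \<le> (4 * X / c + Cc + 1) / D p"
          using D'hi Dpos by (intro divide_right_mono) auto
        also have "\<dots> = (4 * X / c) / D p + (Cc + 1) / D p" by (simp add: add_divide_distrib)
        also have "(4 * X / c) / D p \<le> (4 * X / c) / (c * X)"
          using Dlo Xpos c Dpos by (intro divide_left_mono) auto
        also have "(4 * X / c) / (c * X) = 4 / c^2" using Xpos c by (simp add: power2_eq_square)
        also have "(Cc + 1) / D p \<le> (Cc + 1) / Cc"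
          using D_lo[of p] Cc by (intro divide_left_mono) auto
        also have "(Cc + 1) / Cc \<le> 2" using Cc by (simp add: divide_le_eq)
        finally have "D (Suc p) / D p \<le> 4 / c^2 + 2" by simp
        then show ?case by (simp add: D_def)
      qed
    qed
    then show ?thesis by (rule order.strict_trans1) simp
  qed

  have P6: "\<forall>k \<zeta>. stat_model M N Y \<mu> \<Theta> f \<theta>s \<and> A6 M Y \<Theta> f \<theta>s k \<zeta> \<and> k > (1 + \<rho>) / \<rho>
        \<longrightarrow> (\<exists>\<beta>>0. (\<lambda>p. inv_pow (\<zeta> (hstep \<alpha> (t p) powr (- \<beta>))) k
               * ereal (\<Sum>i\<in>{1..p}. real (t i - t (i - 1)) powr (- k * (if k \<in> \<nat> then 1 else 0))))
             \<longlonglongrightarrow> 0)"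
  proof (intro allI impI, elim conjE)
    fix k and \<zeta> :: "real \<Rightarrow> ereal"
    assume A6: "A6 M Y \<Theta> f \<theta>s k \<zeta>" and kgt: "k > (1 + \<rho>) / \<rho>"
    have k1: "(1 + \<rho>) / \<rho> > 1" using rho by (simp add: field_simps)
    have kpos: "k > 0" using kgt k1 by simp
    have krho: "k * \<rho> > 1"
      using kgt rho by (simp add: field_simps)
    have nlg: "neg_log_growth \<zeta>" using A6 unfolding A6_def by blast
    have "k = 1/2 \<or> (\<exists>n::nat. n \<ge> 1 \<and> k = real n)" using A6 unfolding A6_def by blast
    then have kN: "k \<in> \<nat>" using kgt k1 by (auto simp: of_nat_in_Nats)
    define g where "g i = real (t i - t (i - 1)) powr (- k)" for i
    have gSuc: "g (Suc j) = D j powr (- k)" for j by (simp add: g_def D_def)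
    have g0: "g i \<ge> 0" for i by (simp add: g_def)
    have sumD: "summable (\<lambda>j. D j powr (- k))"
    proof (rule summable_comparison_test_ev)
      show "summable (\<lambda>j. c powr (- k) * real (Suc j) powr (- k * \<rho>))"
      proof (rule summable_mult)
        have "summable (\<lambda>n. real n powr (- k * \<rho>))"
          using krho by (simp add: summable_real_powr_iff)
        then show "summable (\<lambda>j. real (Suc j) powr (- k * \<rho>))"
          by (subst summable_Suc_iff)
      qed
      show "\<forall>\<^sub>F j in sequentially. norm (D j powr (- k)) \<le> c powr (- k) * real (Suc j) powr (- k * \<rho>)"
        using lnTev
      proof eventually_elim
        case (elim j)
        have lp: "ln (T j) \<ge> 1" using elim ln_ge_iff[of "T j" 1] Tgt0[of j] exp_le by linarith
        have tp: "T j powr \<rho> > 0" using Tgt0[of j] by simp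
        have "c * T j powr \<rho> \<le> c * T j powr \<rho> * ln (T j)"
          using lp tp c by simp
        also have "\<dots> \<le> D j" by (rule D_lo2)
        finally have a: "c * T j powr \<rho> \<le> D j" .
        have b: "c * real (Suc j) powr \<rho> \<le> c * T j powr \<rho>"
          using tge[of j] c rho by (intro mult_left_mono powr_mono2) (auto simp: T_def)
        have cpos: "c * real (Suc j) powr \<rho> > 0" using c by simp
        have "D j powr (- k) \<le> (c * real (Suc j) powr \<rho>) powr (- k)"
          using a b cpos kpos by (intro powr_mono2') auto
        also have "\<dots> = c powr (- k) * real (Suc j) powr (- k * \<rho>)"
          using c by (simp add: powr_mult powr_powr mult.commute)
        finally show ?case by simp
      qed
    qed
    have sumg: "summable g"
      using sumD by (subst summable_Suc_iff[symmetric]) (simp add: gSuc)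
    define S where "S = suminf g"
    have Sp: "(\<Sum>i\<in>{1..p}. g i) \<le> S" for p
      unfolding S_def using sumg g0 by (intro sum_le_suminf) auto
    have Sp0: "(\<Sum>i\<in>{1..p}. g i) \<ge> 0" for p using g0 by (intro sum_nonneg) auto
    have sumeq: "(\<Sum>i\<in>{1..p}. real (t i - t (i - 1)) powr (- k * (if k \<in> \<nat> then 1 else 0)))
                 = (\<Sum>i\<in>{1..p}. g i)" for p
      using kN by (simp add: g_def)
    have Ceq: "hstep \<alpha> (t p) powr (- (1/\<alpha>)) = T p" for p
      using Tgt0[of p] al unfolding hst by (simp add: powr_powr)
    have "Limsup at_top (\<lambda>C. \<zeta> C / ereal (ln C)) < 0" using nlg unfolding neg_log_growth_def .
    then obtain y where y1: "Limsup at_top (\<lambda>C. \<zeta> C / ereal (ln C)) < y" and y2: "y < 0"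
      using dense by blast
    obtain \<delta> where yd: "y = ereal (- \<delta>)" and dpos: "\<delta> > 0"
    proof (cases y)
      case (real r) then show ?thesis using that[of "- r"] y2 by simp
    next
      case PInf then show ?thesis using y2 by simp
    next
      case MInf then show ?thesis using y1 by simp
    qed
    have evz: "\<forall>\<^sub>F C in at_top. \<zeta> C / ereal (ln C) < ereal (- \<delta>)"
      using Limsup_lessD[OF y1] yd by simp
    have evz': "\<forall>\<^sub>F p in sequentially. \<zeta> (T p) / ereal (ln (T p)) < ereal (- \<delta>)"
      using filterlim_iff[THEN iffD1, OF limT, rule_format, OF evz] by simp
    define x where "x p = real_of_ereal (inv_pow (\<zeta> (T p)) k)" for p
    have key: "\<forall>\<^sub>F p in sequentially. inv_pow (\<zeta> (T p)) k = ereal (x p) \<and> 0 \<le> x p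
                  \<and> x p \<le> (\<delta> * ln (T p)) powr (- 2 * k)"
      using evz' lnTev
    proof eventually_elim
      case (elim p)
      have lp: "ln (T p) \<ge> 1" using elim(2) ln_ge_iff[of "T p" 1] Tgt0[of p] exp_le by linarith
      show ?case
      proof (cases "\<zeta> (T p)")
        case (real r)
        have "r / ln (T p) < - \<delta>" using elim(1) real lp by simp
        then have r: "r < - \<delta> * ln (T p)" using lp by (simp add: divide_less_eq)
        have dl: "\<delta> * ln (T p) > 0" using dpos lp by simp
        have "r \<noteq> 0" using r dl by simp
        then have iv: "inv_pow (\<zeta> (T p)) k = ereal (\<bar>r\<bar> powr (- 2 * k))"
          using real by (simp add: inv_pow_def)
        have "\<bar>r\<bar> powr (- 2 * k) \<le> (\<delta> * ln (T p)) powr (- 2 * k)"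
          using r dl kpos by (intro powr_mono2') auto
        then show ?thesis using iv by (simp add: x_def)
      next
        case PInf
        then show ?thesis using elim(1) lp by simp
      next
        case MInf
        then show ?thesis by (simp add: x_def inv_pow_def)
      qed
    qed
    show "\<exists>\<beta>>0. (\<lambda>p. inv_pow (\<zeta> (hstep \<alpha> (t p) powr (- \<beta>))) k
               * ereal (\<Sum>i\<in>{1..p}. real (t i - t (i - 1)) powr (- k * (if k \<in> \<nat> then 1 else 0))))
             \<longlonglongrightarrow> 0"
    proof (intro exI conjI)
      show "1 / \<alpha> > 0" using al by simp
      have lim: "(\<lambda>p. x p * (\<Sum>i\<in>{1..p}. g i)) \<longlonglongrightarrow> 0"
      proof (rule Lim_null_comparison)
        have G: "((\<lambda>x::real. (\<delta> * ln x) powr (-2*k) * S) \<longlongrightarrow> 0) at_top"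
          using dpos kpos by real_asymp
        show "(\<lambda>p. (\<delta> * ln (T p)) powr (-2*k) * S) \<longlonglongrightarrow> 0"
          using filterlim_compose[OF G limT] .
        show "\<forall>\<^sub>F p in sequentially. norm (x p * (\<Sum>i\<in>{1..p}. g i)) \<le> (\<delta> * ln (T p)) powr (-2*k) * S"
          using key
        proof eventually_elim
          case (elim p)
          have "norm (x p * (\<Sum>i\<in>{1..p}. g i)) = x p * (\<Sum>i\<in>{1..p}. g i)"
            using elim Sp0[of p] by simp
          also have "\<dots> \<le> (\<delta> * ln (T p)) powr (-2*k) * S"
            using elim Sp0[of p] Sp[of p] by (intro mult_mono) auto
          finally show ?case .
        qed
      qed
      have "(\<lambda>p. ereal (x p * (\<Sum>i\<in>{1..p}. g i))) \<longlonglongrightarrow> ereal 0"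
        using lim by (rule tendsto_ereal)
      moreover have "\<forall>\<^sub>F p in sequentially. ereal (x p * (\<Sum>i\<in>{1..p}. g i)) =
          inv_pow (\<zeta> (hstep \<alpha> (t p) powr (- (1 / \<alpha>)))) k
               * ereal (\<Sum>i\<in>{1..p}. real (t i - t (i - 1)) powr (- k * (if k \<in> \<nat> then 1 else 0)))"
        using key by eventually_elim (simp only: Ceq sumeq, simp)
      ultimately show "(\<lambda>p. inv_pow (\<zeta> (hstep \<alpha> (t p) powr (- (1 / \<alpha>)))) k
               * ereal (\<Sum>i\<in>{1..p}. real (t i - t (i - 1)) powr (- k * (if k \<in> \<nat> then 1 else 0))))
             \<longlonglongrightarrow> 0"
        unfolding zero_ereal_def by (rule Lim_transform_eventually)
    qed
  qed
  show ?thesis using P1 P2 P3 P4 P5 P6 unfolding D_def by blast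
qed

end
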